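(* Let $n_1,n_2$ be positive integers, $C=[c_{j_1,j_2}]\in\mathbb{R}^{n_1\times n_2}$, $\varepsilon>0$, and let $\mathbf{p}_1\in\mathbb{R}^{n_1}_{++}$, $\mathbf{p}_2\in\mathbb{R}^{n_2}_{++}$ satisfy $\mathbf{1}_{n_1}^\top\mathbf{p}_1=\mathbf{1}_{n_2}^\top\mathbf{p}_2$. For $(\mathbf{x},\mathbf{y})\in\mathbb{R}^{n_1}\times\mathbb{R}^{n_2}$ let $C(\mathbf{x},\mathbf{y})=C-\mathbf{x}\mathbf{1}_{n_2}^\top-\mathbf{1}_{n_1}\mathbf{y}^\top$, and set $\hat{\mathrm{D}}=\{(\mathbf{x},\mathbf{y})\in\mathbb{R}^{n_1}\times\mathbb{R}^{n_2}:\ C(\mathbf{x},\mathbf{y})>0 \text{ entrywise}\}$, $\mathrm{D}=\{(\mathbf{x},\mathbf{y})\in\hat{\mathrm{D}}:\ \mathbf{1}_{n_1}^\top\mathbf{x}-\mathbf{1}_{n_2}^\top\mathbf{y}=0\}$, $\beta_C(\mathbf{x},\mathbf{y})=-\sum_{j_1=1}^{n_1}\sum_{j_2=1}^{n_2}\log(c_{j_1,j_2}-x_{j_1}-y_{j_2})$ on $\hat{\mathrm{D}}$, and $$\varphi(\mathbf{x},\mathbf{y},C)=\mathbf{p}_1^\top\mathbf{x}+\mathbf{p}_2^\top\mathbf{y}-\varepsilon\beta_C(\mathbf{x},\mathbf{y})+n_1n_2\varepsilon(1-\log\varepsilon).$$ Then $\varphi$ is concave on $\hat{\mathrm{D}}$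 and strictly concave on $\mathrm{D}$, and $$\max_{(\mathbf{x},\mathbf{y})\in\hat{\mathrm{D}}}\varphi(\mathbf{x},\mathbf{y},C)=\max_{(\mathbf{x},\mathbf{y})\in\mathrm{D}}\varphi(\mathbf{x},\mathbf{y},C)=\tau_\beta(C,P,\varepsilon).$$ Moreover, $\varphi$ attains its maximum on $\hat{\mathrm{D}}$ exactly on the line $\mathrm{L}=\{(\mathbf{u}_1,\mathbf{u}_2)+t(\mathbf{1}_{n_1},-\mathbf{1}_{n_2}):t\in\mathbb{R}\}$, which intersects $\mathrm{D}$ at the unique point $(\mathbf{u}_1,\mathbf{u}_2)=((u_{j_1,1})_{j_1},(u_{j_2,2})_{j_2})$, and this point is the one for which the matrix $U=[u_{j_1,j_2}]$, $u_{j_1,j_2}=\frac{\varepsilon}{c_{j_1,j_2}-u_{j_1,1}-u_{j_2,2}}$, lies in $\mathrm{V}_o(P)$ and is the minimizer in the definition of $\tau_\beta(C,P,\varepsilon)$.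
   Context: $\mathbf{1}_n$ is the all-ones vector in $\mathbb{R}^n$; $\mathbb{R}^n_{++}$ is the set of entrywise positive vectors. For $P=(\mathbf{p}_1,\mathbf{p}_2)$, $\mathrm{V}(P)=\{V\in\mathbb{R}^{n_1\times n_2}_+:\ V\mathbf{1}_{n_2}=\mathbf{p}_1,\ V^\top\mathbf{1}_{n_1}=\mathbf{p}_2\}$ and $\mathrm{V}_o(P)$ is the set of entrywise positive matrices in $\mathrm{V}(P)$. For $V\in\mathbb{R}^{n_1\times n_2}_{++}$, $\beta(V)=-\sum_{j_1,j_2}\log v_{j_1,j_2}$, and $\tau_\beta(C,P,\varepsilon)=\min_{V\in\mathrm{V}_o(P)}\big(\operatorname{tr}C^\top V+\varepsilon\beta(V)\big)$. *)

theory Defs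
  imports "HOL-Analysis.Analysis"
begin

text \<open>Indices: rows range over the finite type 'n (n1 = CARD('n)), columns over 'm (n2 = CARD('m)).
  Vectors in R^n1 are real^'n, matrices in R^(n1 x n2) are real^'m^'n (entry C$i$j).\<close>

definition strict_concave_on :: "'a::real_vector set \<Rightarrow> ('a \<Rightarrow> real) \<Rightarrow> bool" where
  "strict_concave_on S f \<longleftrightarrow> convex S \<and>
    (\<forall>x\<in>S. \<forall>y\<in>S. x \<noteq> y \<longrightarrow> (\<forall>t. 0 < t \<and> t < 1 \<longrightarrow>
        f ((1 - t) *\<^sub>R x + t *\<^sub>R y) > (1 - t) * f x + t * f y))"

definition Vset :: "real^'n \<Rightarrow> real^'m \<Rightarrow> (real^'m^'n) set" where
  "Vset p1 p2 = {V. (\<forall>i j. V$i$j \<ge> 0) \<and> (\<forall>i. (\<Sum>j\<in>UNIV. V$i$j) = p1$i)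
                     \<and> (\<forall>j. (\<Sum>i\<in>UNIV. V$i$j) = p2$j)}"

definition Vo :: "real^'n \<Rightarrow> real^'m \<Rightarrow> (real^'m^'n) set" where
  "Vo p1 p2 = {V \<in> Vset p1 p2. \<forall>i j. V$i$j > 0}"

definition beta :: "real^'m^'n \<Rightarrow> real" where
  "beta V = - (\<Sum>i\<in>UNIV. \<Sum>j\<in>UNIV. ln (V$i$j))"

definition tau_obj :: "real^'m^'n \<Rightarrow> real \<Rightarrow> real^'m^'n \<Rightarrow> real" where
  "tau_obj C eps V = (\<Sum>i\<in>UNIV. \<Sum>j\<in>UNIV. C$i$j * V$i$j) + eps * beta V"

text \<open>tau_beta(C,P,eps) = min over Vo(P); rendered as the infimum (attainment is part of the theorem).\<close>
definition tau_beta :: "real^'m^'n \<Rightarrow> real^'n \<Rightarrow> real^'m \<Rightarrow> real \<Rightarrow> real" where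
  "tau_beta C p1 p2 eps = (INF V\<in>Vo p1 p2. tau_obj C eps V)"

definition Dhat :: "real^'m^'n \<Rightarrow> ((real^'n) \<times> (real^'m)) set" where
  "Dhat C = {(x, y). \<forall>i j. C$i$j - x$i - y$j > 0}"

definition D :: "real^'m^'n \<Rightarrow> ((real^'n) \<times> (real^'m)) set" where
  "D C = {(x, y) \<in> Dhat C. (\<Sum>i\<in>UNIV. x$i) - (\<Sum>j\<in>UNIV. y$j) = 0}"

definition betaC :: "real^'m^'n \<Rightarrow> (real^'n) \<times> (real^'m) \<Rightarrow> real" where
  "betaC C z = - (\<Sum>i\<in>UNIV. \<Sum>j\<in>UNIV. ln (C$i$j - (fst z)$i - (snd z)$j))"

definition phi :: "real^'n \<Rightarrow> real^'m \<Rightarrow> real \<Rightarrow> real^'m^'n \<Rightarrow> (real^'n) \<times> (real^'m) \<Rightarrow> real" where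
  "phi p1 p2 eps C z = p1 \<bullet> fst z + p2 \<bullet> snd z - eps * betaC C z
      + real (CARD('n) * CARD('m)) * eps * (1 - ln eps)"

definition Lline :: "real^'n \<Rightarrow> real^'m \<Rightarrow> ((real^'n) \<times> (real^'m)) set" where
  "Lline u1 u2 = {(u1 + t *\<^sub>R (\<chi> i. 1), u2 - t *\<^sub>R (\<chi> j. 1)) | t. True}"

definition Umat :: "real \<Rightarrow> real^'m^'n \<Rightarrow> real^'n \<Rightarrow> real^'m \<Rightarrow> real^'m^'n" where
  "Umat eps C x y = (\<chi> i j. eps / (C$i$j - x$i - y$j))"

end

theory Submission imports Defs begin

lemma ln_strict: "0 < (y::real) \<Longrightarrow> y \<noteq> 1 \<Longrightarrow> ln y < y - 1"
  using ln_eq_minus_one ln_le_minus_one nless_le by blast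

lemma ln_conc:
  fixes a b t :: real
  assumes a: "0 < a" and b: "0 < b" and t0: "0 \<le> t" and t1: "t \<le> 1"
  shows "(1 - t) * ln a + t * ln b \<le> ln ((1 - t) * a + t * b)"
    and "a \<noteq> b \<Longrightarrow> 0 < t \<Longrightarrow> t < 1 \<Longrightarrow> (1 - t) * ln a + t * ln b < ln ((1 - t) * a + t * b)"
proof -
  define m where "m = (1 - t) * a + t * b"
  have m: "0 < m"
  proof (cases "t = 0")
    case True then show ?thesis using a by (simp add: m_def)
  next
    case False then have "0 < t * b" using t0 b by simp
    moreover have "0 \<le> (1 - t) * a" using t1 a by simp
    ultimately show ?thesis by (simp add: m_def)
  qed
  have la: "ln a - ln m = ln (a / m)" using a m by (simp add: ln_div)
  have lb: "ln b - ln m = ln (b / m)" using b m by (simp add: ln_div)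
  have ea: "ln (a/m) \<le> a/m - 1" using a m by (intro ln_le_minus_one) simp
  have eb: "ln (b/m) \<le> b/m - 1" using b m by (intro ln_le_minus_one) simp
  have sum0: "(1 - t) * (a/m - 1) + t * (b/m - 1) = 0"
    using m by (simp add: field_simps m_def)
  have "(1 - t) * ln (a/m) + t * ln (b/m) \<le> (1 - t) * (a/m - 1) + t * (b/m - 1)"
    using ea eb t0 t1 by (intro add_mono mult_left_mono) auto
  then have "(1 - t) * (ln a - ln m) + t * (ln b - ln m) \<le> 0" using la lb sum0 by simp
  then show "(1 - t) * ln a + t * ln b \<le> ln ((1 - t) * a + t * b)"
    unfolding m_def[symmetric] by (simp add: algebra_simps)
  assume ab: "a \<noteq> b" and tp: "0 < t" and tl: "t < 1"
  have "m \<noteq> a" using ab tp by (simp add: m_def algebra_simps)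
  then have "a / m \<noteq> 1" using m by simp
  then have ea': "ln (a/m) < a/m - 1" using a m by (intro ln_strict) simp_all
  have "(1 - t) * ln (a/m) + t * ln (b/m) < (1 - t) * (a/m - 1) + t * (b/m - 1)"
    using ea' eb tp tl by (intro add_less_le_mono mult_strict_left_mono mult_left_mono) auto
  then have "(1 - t) * (ln a - ln m) + t * (ln b - ln m) < 0" using la lb sum0 by simp
  then show "(1 - t) * ln a + t * ln b < ln ((1 - t) * a + t * b)"
    unfolding m_def[symmetric] by (simp add: algebra_simps)
qed

lemma h_nonneg:
  fixes a v eps :: real
  assumes a: "0 < a" and v: "0 < v" and e: "0 < eps"
  shows "0 \<le> a * v - eps * ln v - eps * ln a - eps + eps * ln eps"
    and "a * v - eps * ln v - eps * ln a - eps + eps * ln eps = 0 \<Longrightarrow> v = eps / a"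
proof -
  define y where "y = a * v / eps"
  have y: "0 < y" using a v e by (simp add: y_def)
  have ly: "ln y = ln a + ln v - ln eps" using a v e by (simp add: y_def ln_div ln_mult)
  have eyv: "eps * y = a * v" using e by (simp add: y_def)
  have eln: "eps * ln y = eps * ln a + eps * ln v - eps * ln eps" by (simp add: ly algebra_simps)
  have "eps * (y - 1 - ln y) = eps * y - eps - eps * ln y" by (simp add: algebra_simps)
  with eyv eln have hy: "a * v - eps * ln v - eps * ln a - eps + eps * ln eps = eps * (y - 1 - ln y)"
    by linarith
  show "0 \<le> a * v - eps * ln v - eps * ln a - eps + eps * ln eps"
    unfolding hy using ln_le_minus_one[OF y] e by simp
  assume "a * v - eps * ln v - eps * ln a - eps + eps * ln eps = 0"
  then have "ln y = y - 1" unfolding hy using e by simp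
  then have "y = 1" using ln_strict[OF y] by force
  then show "v = eps / a" using a e by (simp add: y_def field_simps)
qed

lemma h_bounds:
  fixes a v eps R :: real
  assumes a: "0 < a" and v: "0 < v" and e: "0 < eps"
    and h: "a * v - eps * ln v - eps * ln a - eps + eps * ln eps \<le> R"
  shows "exp ((- R - eps * ln v - eps + eps * ln eps) / eps) \<le> a"
    and "a \<le> 2 * (R + eps) / v"
proof -
  have "0 < a * v" using a v by simp
  then have "- R - eps * ln v - eps + eps * ln eps \<le> eps * ln a" using h by simp
  then have "(- R - eps * ln v - eps + eps * ln eps) / eps \<le> ln a" using e
    by (simp add: divide_le_eq mult.commute)
  then have "exp ((- R - eps * ln v - eps + eps * ln eps) / eps) \<le> exp (ln a)" by simp
  then show "exp ((- R - eps * ln v - eps + eps * ln eps) / eps) \<le> a" using a by simp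
  define y where "y = a * v / eps"
  have y: "0 < y" using a v e by (simp add: y_def)
  have ly: "ln y = ln a + ln v - ln eps" using a v e by (simp add: y_def ln_div ln_mult)
  have eyv: "eps * y = a * v" using e by (simp add: y_def)
  have eln: "eps * ln y = eps * ln a + eps * ln v - eps * ln eps" by (simp add: ly algebra_simps)
  have "eps * (y - 1 - ln y) = eps * y - eps - eps * ln y" by (simp add: algebra_simps)
  with eyv eln have hy: "a * v - eps * ln v - eps * ln a - eps + eps * ln eps = eps * (y - 1 - ln y)"
    by linarith
  have "ln y = ln (y/2) + ln 2" using y by (simp add: ln_div)
  also have "\<dots> \<le> y/2 - 1 + ln 2" using ln_le_minus_one[of "y/2"] y by simp
  also have "\<dots> \<le> y / 2" using ln_2_less_1 by simp
  finally have "ln y \<le> y / 2" .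
  then have "eps * (y/2 - 1) \<le> eps * (y - 1 - ln y)" using e by (intro mult_left_mono) auto
  then have "eps * (y/2 - 1) \<le> R" using h hy by linarith
  moreover have "eps * (y/2 - 1) = (eps * y) / 2 - eps" by (simp add: algebra_simps)
  ultimately have "a * v / 2 - eps \<le> R" using eyv by linarith
  then have "a * v \<le> 2 * (R + eps)" by simp
  then show "a \<le> 2 * (R + eps) / v" using v by (simp add: le_divide_eq)
qed


definition aC :: "real^'m^'n \<Rightarrow> (real^'n) \<times> (real^'m) \<Rightarrow> 'n \<Rightarrow> 'm \<Rightarrow> real" where
  "aC C z i j = C$i$j - fst z$i - snd z$j"

lemma Dhat_iff: "z \<in> Dhat C \<longleftrightarrow> (\<forall>i j. 0 < aC C z i j)"
  by (cases z) (simp add: Dhat_def aC_def)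

lemma D_iff: "z \<in> D C \<longleftrightarrow> z \<in> Dhat C \<and> (\<Sum>i\<in>UNIV. fst z$i) = (\<Sum>j\<in>UNIV. snd z$j)"
  by (cases z) (auto simp: D_def)

lemma phi_aC:
  fixes C :: "real^'m^'n"
  shows "phi p1 p2 eps C z = p1 \<bullet> fst z + p2 \<bullet> snd z + eps * (\<Sum>i\<in>UNIV. \<Sum>j\<in>UNIV. ln (aC C z i j))
      + real (CARD('n) * CARD('m)) * eps * (1 - ln eps)"
  by (simp add: phi_def betaC_def aC_def)

lemma gap:
  fixes C V :: "real^'m^'n"
  assumes "V \<in> Vset p1 p2"
  shows "tau_obj C eps V - phi p1 p2 eps C z =
    (\<Sum>i\<in>UNIV. \<Sum>j\<in>UNIV. aC C z i j * V$i$j - eps * ln (V$i$j) - eps * ln (aC C z i j) - eps + eps * ln eps)"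
proof -
  obtain x y where z: "z = (x, y)" by (cases z)
  from assms have rows: "\<And>i. (\<Sum>j\<in>UNIV. V$i$j) = p1$i" and cols: "\<And>j. (\<Sum>i\<in>UNIV. V$i$j) = p2$j"
    by (auto simp: Vset_def)
  have px: "p1 \<bullet> x = (\<Sum>i\<in>UNIV. \<Sum>j\<in>UNIV. V$i$j * x$i)"
    by (simp add: inner_vec_def rows[symmetric] sum_distrib_right)
  have py0: "p2 \<bullet> y = (\<Sum>j\<in>UNIV. \<Sum>i\<in>UNIV. V$i$j * y$j)"
    by (simp add: inner_vec_def cols[symmetric] sum_distrib_right)
  have py: "p2 \<bullet> y = (\<Sum>i\<in>UNIV. \<Sum>j\<in>UNIV. V$i$j * y$j)"
    unfolding py0 by (rule sum.swap)
  have fz: "fst z = x" "snd z = y" by (simp_all add: z)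
  define k where "k = eps * (1 - ln eps)"
  have summ: "aC C z i j * V$i$j - eps * ln (V$i$j) - eps * ln (aC C z i j) - eps + eps * ln eps
     = C$i$j * V$i$j - V$i$j * x$i - V$i$j * y$j - eps * ln (V$i$j) - eps * ln (aC C z i j) - k" for i j
  proof -
    have "aC C z i j * V$i$j = C$i$j * V$i$j - V$i$j * x$i - V$i$j * y$j" by (simp add: aC_def z algebra_simps)
    moreover have "k = eps - eps * ln eps" by (simp add: k_def right_diff_distrib)
    ultimately show ?thesis by linarith
  qed
  define X1 where "X1 = (\<Sum>i\<in>UNIV. \<Sum>j\<in>UNIV. C$i$j * V$i$j)"
  define X2 where "X2 = (\<Sum>i\<in>UNIV. \<Sum>j\<in>UNIV. V$i$j * x$i)"
  define X3 where "X3 = (\<Sum>i\<in>UNIV. \<Sum>j\<in>UNIV. V$i$j * y$j)"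
  define L where "L = (\<Sum>i\<in>UNIV. \<Sum>j\<in>UNIV. ln (V$i$j))"
  define Sa where "Sa = (\<Sum>i\<in>UNIV. \<Sum>j\<in>UNIV. ln (aC C z i j))"
  define N where "N = real (CARD('n) * CARD('m))"
  have kk: "(\<Sum>i\<in>(UNIV::'n set). \<Sum>j\<in>(UNIV::'m set). k) = N * k" by (simp add: N_def)
  have el: "(\<Sum>i\<in>UNIV. \<Sum>j\<in>UNIV. eps * ln (V$i$j)) = eps * L" by (simp add: L_def sum_distrib_left)
  have ea: "(\<Sum>i\<in>UNIV. \<Sum>j\<in>UNIV. eps * ln (aC C z i j)) = eps * Sa" by (simp add: Sa_def sum_distrib_left)
  have "(\<Sum>i\<in>UNIV. \<Sum>j\<in>UNIV. aC C z i j * V$i$j - eps * ln (V$i$j) - eps * ln (aC C z i j) - eps + eps * ln eps)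
     = (\<Sum>i\<in>UNIV. \<Sum>j\<in>UNIV. C$i$j * V$i$j - V$i$j * x$i - V$i$j * y$j - eps * ln (V$i$j) - eps * ln (aC C z i j) - k)"
    by (simp only: summ)
  also have "\<dots> = X1 - X2 - X3 - eps * L - eps * Sa - N * k"
    unfolding X1_def X2_def X3_def el[symmetric] ea[symmetric] kk[symmetric] by (simp only: sum_subtractf)
  also have "\<dots> = tau_obj C eps V - phi p1 p2 eps C z"
    unfolding tau_obj_def beta_def phi_aC fz px py X1_def[symmetric] X2_def[symmetric]
      X3_def[symmetric] L_def[symmetric] N_def[symmetric] Sa_def[symmetric] k_def
    by (simp add: algebra_simps)
  finally show ?thesis by simp
qed

lemma WD:
  fixes C V :: "real^'m^'n"
  assumes z: "z \<in> Dhat C" and V: "V \<in> Vo p1 p2" and e: "0 < eps"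
  shows "phi p1 p2 eps C z \<le> tau_obj C eps V"
    and "phi p1 p2 eps C z = tau_obj C eps V \<Longrightarrow> V = Umat eps C (fst z) (snd z)"
proof -
  define h where "h i j = aC C z i j * V$i$j - eps * ln (V$i$j) - eps * ln (aC C z i j) - eps + eps * ln eps" for i j
  have Vs: "V \<in> Vset p1 p2" and Vp: "\<forall>i j. 0 < V$i$j" using V by (auto simp: Vo_def)
  have ap: "\<forall>i j. 0 < aC C z i j" using z Dhat_iff by blast
  have hnn: "0 \<le> h i j" for i j unfolding h_def by (rule h_nonneg(1)) (use ap Vp e in auto)
  have g: "tau_obj C eps V - phi p1 p2 eps C z = (\<Sum>i\<in>UNIV. \<Sum>j\<in>UNIV. h i j)"
    unfolding h_def by (rule gap[OF Vs])
  have inn: "\<And>i. 0 \<le> (\<Sum>j\<in>UNIV. h i j)" by (intro sum_nonneg) (simp add: hnn)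
  have "0 \<le> (\<Sum>i\<in>UNIV. \<Sum>j\<in>UNIV. h i j)" by (intro sum_nonneg) (simp add: hnn)
  then show "phi p1 p2 eps C z \<le> tau_obj C eps V" using g by linarith
  assume eq: "phi p1 p2 eps C z = tau_obj C eps V"
  then have "(\<Sum>i\<in>UNIV. \<Sum>j\<in>UNIV. h i j) = 0" using g by simp
  then have "\<forall>i. (\<Sum>j\<in>UNIV. h i j) = 0" using sum_nonneg_eq_0_iff[of UNIV "\<lambda>i. \<Sum>j\<in>UNIV. h i j"] inn by simp
  then have "\<forall>i j. h i j = 0"
  proof (intro allI)
    fix i j
    assume "\<forall>i. (\<Sum>j\<in>UNIV. h i j) = 0"
    then have "sum (h i) UNIV = 0" by simp
    then show "h i j = 0" using sum_nonneg_eq_0_iff[of UNIV "h i"] hnn by simp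
  qed
  then have "V$i$j = eps / aC C z i j" for i j unfolding h_def by (intro h_nonneg(2)) (use ap Vp e in auto)
  then show "V = Umat eps C (fst z) (snd z)" by (simp add: vec_eq_iff Umat_def aC_def)
qed

lemma eqU:
  fixes C :: "real^'m^'n"
  assumes z: "z \<in> Dhat C" and U: "Umat eps C (fst z) (snd z) \<in> Vo p1 p2" and e: "0 < eps"
  shows "phi p1 p2 eps C z = tau_obj C eps (Umat eps C (fst z) (snd z))"
proof -
  have Vs: "Umat eps C (fst z) (snd z) \<in> Vset p1 p2" using U by (auto simp: Vo_def)
  have ap: "\<forall>i j. 0 < aC C z i j" using z Dhat_iff by blast
  have U': "\<And>i j. Umat eps C (fst z) (snd z) $i$j = eps / aC C z i j" by (simp add: Umat_def aC_def)
  have "aC C z i j * (eps / aC C z i j) - eps * ln (eps / aC C z i j) - eps * ln (aC C z i j) - eps + eps * ln eps = 0" for i j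
  proof -
    have a: "0 < aC C z i j" using ap by blast
    then show ?thesis using e by (simp add: ln_div algebra_simps)
  qed
  then show ?thesis using gap[OF Vs, of C eps z] by (simp add: U')
qed

lemma shift_aC: "aC C (x + t *\<^sub>R (\<chi> i. 1), y - t *\<^sub>R (\<chi> j. 1)) i j = aC C (x, y) i j"
  by (simp add: aC_def)

lemma shift_phi:
  fixes C :: "real^'m^'n" and x :: "real^'n" and y :: "real^'m"
  assumes mass: "(\<Sum>i\<in>UNIV. p1$i) = (\<Sum>j\<in>UNIV. p2$j)"
  shows "phi p1 p2 eps C (x + t *\<^sub>R (\<chi> i. 1), y - t *\<^sub>R (\<chi> j. 1)) = phi p1 p2 eps C (x, y)"
proof -
  have a: "p1 \<bullet> (\<chi> i. 1) = (\<Sum>i\<in>UNIV. p1$i)" by (simp add: inner_vec_def)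
  have b: "p2 \<bullet> (\<chi> i. 1) = (\<Sum>i\<in>UNIV. p2$i)" by (simp add: inner_vec_def)
  show ?thesis
    by (simp only: phi_aC shift_aC) (simp add: inner_add_right inner_diff_right a b mass)
qed

lemma line_char:
  fixes x x' :: "real^'n" and y y' :: "real^'m"
  assumes h: "\<forall>i j. x$i + y$j = x'$i + y'$j"
  shows "\<exists>t. x = x' + t *\<^sub>R (\<chi> i. 1) \<and> y = y' - t *\<^sub>R (\<chi> j. 1)"
proof -
  define i0 :: 'n where "i0 = undefined"
  define j0 :: 'm where "j0 = undefined"
  define t where "t = x$i0 - x'$i0"
  have "x = x' + t *\<^sub>R (\<chi> i. 1)"
  proof (simp add: vec_eq_iff, intro allI)
    fix i
    have "x$i + y$j0 = x'$i + y'$j0" "x$i0 + y$j0 = x'$i0 + y'$j0" using h by auto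
    then show "x$i = x'$i + t" by (simp add: t_def)
  qed
  moreover have "y = y' - t *\<^sub>R (\<chi> j. 1)"
  proof (simp add: vec_eq_iff, intro allI)
    fix j
    have "x$i0 + y$j = x'$i0 + y'$j" using h by auto
    then show "y$j = y'$j - t" by (simp add: t_def)
  qed
  ultimately show ?thesis by blast
qed

lemma line_D:
  fixes x x' :: "real^'n" and y y' :: "real^'m"
  assumes h: "\<forall>i j. x$i + y$j = x'$i + y'$j"
    and s1: "(\<Sum>i\<in>UNIV. x$i) = (\<Sum>j\<in>UNIV. y$j)" and s2: "(\<Sum>i\<in>UNIV. x'$i) = (\<Sum>j\<in>UNIV. y'$j)"
  shows "x = x' \<and> y = y'"
proof -
  obtain t where t: "x = x' + t *\<^sub>R (\<chi> i. 1)" "y = y' - t *\<^sub>R (\<chi> j. 1)" using line_char[OF h] by blast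
  have "(\<Sum>i\<in>UNIV. x$i) = (\<Sum>i\<in>UNIV. x'$i) + t * real CARD('n)" by (simp add: t sum.distrib)
  moreover have "(\<Sum>j\<in>UNIV. y$j) = (\<Sum>j\<in>UNIV. y'$j) - t * real CARD('m)" by (simp add: t sum_subtractf)
  ultimately have "t * (real CARD('n) + real CARD('m)) = 0" using s1 s2 by (simp add: algebra_simps)
  moreover have "real CARD('n) + real CARD('m) > 0" by (simp add: add_pos_pos)
  ultimately have "t = 0" by simp
  then show ?thesis using t by simp
qed

lemma comb_aC: "aC C ((1 - t) *\<^sub>R z + t *\<^sub>R w) i j = (1 - t) * aC C z i j + t * aC C w i j"
  by (simp add: aC_def algebra_simps)

lemma comb_phi:
  fixes C :: "real^'m^'n"
  shows "phi p1 p2 eps C ((1 - t) *\<^sub>R z + t *\<^sub>R w) - ((1 - t) * phi p1 p2 eps C z + t * phi p1 p2 eps C w)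
    = eps * (\<Sum>i\<in>UNIV. \<Sum>j\<in>UNIV. ln ((1 - t) * aC C z i j + t * aC C w i j) - (1 - t) * ln (aC C z i j) - t * ln (aC C w i j))"
proof -
  have s: "(\<Sum>i\<in>UNIV. \<Sum>j\<in>UNIV. ln ((1 - t) * aC C z i j + t * aC C w i j) - (1 - t) * ln (aC C z i j) - t * ln (aC C w i j))
    = (\<Sum>i\<in>UNIV. \<Sum>j\<in>UNIV. ln ((1 - t) * aC C z i j + t * aC C w i j)) - (1 - t) * (\<Sum>i\<in>UNIV. \<Sum>j\<in>UNIV. ln (aC C z i j))
      - t * (\<Sum>i\<in>UNIV. \<Sum>j\<in>UNIV. ln (aC C w i j))"
    by (simp only: sum_subtractf sum_distrib_left[symmetric])
  have i1: "p1 \<bullet> fst ((1 - t) *\<^sub>R z + t *\<^sub>R w) = (1 - t) * (p1 \<bullet> fst z) + t * (p1 \<bullet> fst w)"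
    by (simp add: inner_add_right)
  have i2: "p2 \<bullet> snd ((1 - t) *\<^sub>R z + t *\<^sub>R w) = (1 - t) * (p2 \<bullet> snd z) + t * (p2 \<bullet> snd w)"
    by (simp add: inner_add_right)
  define S where "S = (\<Sum>i\<in>UNIV. \<Sum>j\<in>UNIV. ln ((1 - t) * aC C z i j + t * aC C w i j))"
  define S1 where "S1 = (\<Sum>i\<in>UNIV. \<Sum>j\<in>UNIV. ln (aC C z i j))"
  define S2 where "S2 = (\<Sum>i\<in>UNIV. \<Sum>j\<in>UNIV. ln (aC C w i j))"
  define K where "K = real (CARD('n) * CARD('m)) * eps * (1 - ln eps)"
  define a1 where "a1 = p1 \<bullet> fst z"
  define a2 where "a2 = p1 \<bullet> fst w"
  define b1 where "b1 = p2 \<bullet> snd z"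
  define b2 where "b2 = p2 \<bullet> snd w"
  have "phi p1 p2 eps C ((1 - t) *\<^sub>R z + t *\<^sub>R w) - ((1 - t) * phi p1 p2 eps C z + t * phi p1 p2 eps C w)
     = ((1-t)*a1 + t*a2) + ((1-t)*b1 + t*b2) + eps*S + K
     - ((1-t)*(a1 + b1 + eps*S1 + K) + t*(a2 + b2 + eps*S2 + K))"
    unfolding S_def S1_def S2_def K_def a1_def a2_def b1_def b2_def phi_aC comb_aC i1 i2 by (rule refl)
  also have "\<dots> = eps*(S - (1-t)*S1 - t*S2)" by (simp add: algebra_simps)
  finally show ?thesis unfolding s S_def S1_def S2_def .
qed


lemma comb_aC2: "u + v = 1 \<Longrightarrow> aC C (u *\<^sub>R z + v *\<^sub>R w) i j = u * aC C z i j + v * aC C w i j"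
proof -
  assume uv: "u + v = 1"
  have "C$i$j = u * C$i$j + v * C$i$j" using uv by (metis distrib_right mult_1)
  then show ?thesis by (simp add: aC_def algebra_simps)
qed

lemma pos_comb: "0 \<le> u \<Longrightarrow> 0 \<le> v \<Longrightarrow> u + v = 1 \<Longrightarrow> 0 < a \<Longrightarrow> 0 < b \<Longrightarrow> 0 < u * a + v * (b::real)"
proof -
  assume h: "0 \<le> u" "0 \<le> v" "u + v = 1" "0 < a" "0 < b"
  show ?thesis
  proof (cases "u = 0")
    case True then show ?thesis using h by simp
  next
    case False then have "0 < u * a" using h by simp
    moreover have "0 \<le> v * b" using h by simp
    ultimately show ?thesis by simp
  qed
qed

lemma convex_Dhat:
  fixes C :: "real^'m^'n"
  shows "convex (Dhat C)"
  unfolding convex_def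
proof (intro ballI allI impI)
  fix z w :: "(real^'n) \<times> (real^'m)" and u v :: real
  assume z: "z \<in> Dhat C" and w: "w \<in> Dhat C" and uv: "0 \<le> u" "0 \<le> v" "u + v = 1"
  have az: "\<forall>i j. 0 < aC C z i j" and aw: "\<forall>i j. 0 < aC C w i j" using z w Dhat_iff by blast+
  show "u *\<^sub>R z + v *\<^sub>R w \<in> Dhat C"
    unfolding Dhat_iff comb_aC2[OF uv(3)] using az aw uv by (intro allI pos_comb) auto
qed

lemma convex_D:
  fixes C :: "real^'m^'n"
  shows "convex (D C)"
  unfolding convex_def
proof (intro ballI allI impI)
  fix z w :: "(real^'n) \<times> (real^'m)" and u v :: real
  assume z: "z \<in> D C" and w: "w \<in> D C" and uv: "0 \<le> u" "0 \<le> v" "u + v = 1"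
  have "u *\<^sub>R z + v *\<^sub>R w \<in> Dhat C"
    using convex_Dhat[of C] z w uv unfolding convex_def D_iff by blast
  moreover have "(\<Sum>i\<in>UNIV. fst (u *\<^sub>R z + v *\<^sub>R w)$i) = (\<Sum>j\<in>UNIV. snd (u *\<^sub>R z + v *\<^sub>R w)$j)"
    using z w unfolding D_iff by (simp add: sum.distrib sum_distrib_left[symmetric])
  ultimately show "u *\<^sub>R z + v *\<^sub>R w \<in> D C" unfolding D_iff by blast
qed

lemma concave_phi:
  fixes C :: "real^'m^'n"
  assumes e: "0 < eps"
  shows "concave_on (Dhat C) (phi p1 p2 eps C)"
  unfolding concave_on_iff
proof (intro conjI convex_Dhat ballI allI impI)
  fix z w :: "(real^'n) \<times> (real^'m)" and u v :: real
  assume z: "z \<in> Dhat C" and w: "w \<in> Dhat C" and uv: "0 \<le> u" "0 \<le> v" "u + v = 1"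
  have u: "u = 1 - v" using uv by simp
  have az: "\<forall>i j. 0 < aC C z i j" and aw: "\<forall>i j. 0 < aC C w i j" using z w Dhat_iff by blast+
  have pt: "0 \<le> ln ((1 - v) * aC C z i j + v * aC C w i j) - (1 - v) * ln (aC C z i j) - v * ln (aC C w i j)" for i j
    using ln_conc(1)[of "aC C z i j" "aC C w i j" v] az aw uv by auto
  have "0 \<le> (\<Sum>i\<in>UNIV. \<Sum>j\<in>UNIV. ln ((1 - v) * aC C z i j + v * aC C w i j) - (1 - v) * ln (aC C z i j) - v * ln (aC C w i j))"
    by (intro sum_nonneg pt)
  then have "0 \<le> eps * (\<Sum>i\<in>UNIV. \<Sum>j\<in>UNIV. ln ((1 - v) * aC C z i j + v * aC C w i j) - (1 - v) * ln (aC C z i j) - v * ln (aC C w i j))"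
    using e by simp
  then show "u * phi p1 p2 eps C z + v * phi p1 p2 eps C w \<le> phi p1 p2 eps C (u *\<^sub>R z + v *\<^sub>R w)"
    unfolding u using comb_phi[of p1 p2 eps C v z w] by linarith
qed

lemma strict_concave_phi:
  fixes C :: "real^'m^'n"
  assumes e: "0 < eps"
  shows "strict_concave_on (D C) (phi p1 p2 eps C)"
  unfolding strict_concave_on_def
proof (intro conjI convex_D ballI allI impI)
  fix z w :: "(real^'n) \<times> (real^'m)" and t :: real
  assume z: "z \<in> D C" and w: "w \<in> D C" and zw: "z \<noteq> w" and t: "0 < t \<and> t < 1"
  have az: "\<forall>i j. 0 < aC C z i j" and aw: "\<forall>i j. 0 < aC C w i j" using z w D_iff Dhat_iff by blast+
  obtain i0 j0 where ne: "aC C z i0 j0 \<noteq> aC C w i0 j0"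
  proof -
    { assume all: "\<forall>i j. aC C z i j = aC C w i j"
      then have "\<forall>i j. fst z$i + snd z$j = fst w$i + snd w$j" by (auto simp: aC_def algebra_simps)
      then have "fst z = fst w \<and> snd z = snd w" using z w unfolding D_iff by (intro line_D) auto
      then have False using zw by (simp add: prod_eq_iff) }
    then show ?thesis using that by blast
  qed
  define f where "f i j = ln ((1 - t) * aC C z i j + t * aC C w i j) - (1 - t) * ln (aC C z i j) - t * ln (aC C w i j)" for i j
  have fnn: "0 \<le> f i j" for i j using ln_conc(1)[of "aC C z i j" "aC C w i j" t] az aw t unfolding f_def by auto
  have fpos: "0 < f i0 j0" using ln_conc(2)[of "aC C z i0 j0" "aC C w i0 j0" t] az aw t ne unfolding f_def by auto
  have "0 < (\<Sum>j\<in>UNIV. f i0 j)" by (rule sum_pos2[of UNIV j0]) (use fnn fpos in auto)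
  then have "0 < (\<Sum>i\<in>UNIV. \<Sum>j\<in>UNIV. f i j)" by (intro sum_pos2[of UNIV i0]) (auto intro: sum_nonneg fnn)
  then have "0 < eps * (\<Sum>i\<in>UNIV. \<Sum>j\<in>UNIV. f i j)" using e by simp
  then show "(1 - t) * phi p1 p2 eps C z + t * phi p1 p2 eps C w < phi p1 p2 eps C ((1 - t) *\<^sub>R z + t *\<^sub>R w)"
    using comb_phi[of p1 p2 eps C t z w] unfolding f_def by simp
qed


lemma card_sum_bound:
  fixes f :: "'k::finite \<Rightarrow> real"
  assumes "\<And>i. \<bar>f i\<bar> \<le> B"
  shows "\<bar>\<Sum>i\<in>UNIV. f i\<bar> \<le> real CARD('k) * B"
proof -
  have "\<bar>\<Sum>i\<in>UNIV. f i\<bar> \<le> (\<Sum>i\<in>UNIV. \<bar>f i\<bar>)" by (rule sum_abs)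
  also have "\<dots> \<le> real (card (UNIV::'k set)) * B" using assms by (intro sum_bounded_above) auto
  finally show ?thesis by simp
qed

lemma bounded_box:
  fixes S :: "((real^'n) \<times> (real^'m)) set"
  assumes hS: "\<forall>z\<in>S. (\<Sum>i\<in>UNIV. fst z$i) = (\<Sum>j\<in>UNIV. snd z$j) \<and> (\<forall>i j. \<bar>fst z$i + snd z$j\<bar> \<le> B)"
  shows "bounded S"
proof -
  define N1 where "N1 = real CARD('n)"
  define N2 where "N2 = real CARD('m)"
  have N1: "0 < N1" and N2: "0 < N2" by (simp_all add: N1_def N2_def)
  have key: "norm z \<le> N1 * (4 * B) + N2 * (3 * B)" if zS: "z \<in> S" for z
  proof -
    obtain x y where z: "z = (x, y)" by (cases z)
    have h: "\<And>i j. \<bar>x$i + y$j\<bar> \<le> B" and s: "(\<Sum>i\<in>UNIV. x$i) = (\<Sum>j\<in>UNIV. y$j)"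
      using hS zS z by auto
    define i0 :: 'n where "i0 = undefined"
    define j0 :: 'm where "j0 = undefined"
    have B0: "0 \<le> B" using h[of i0 j0] by linarith
    have d1: "\<bar>x$i - x$i0\<bar> \<le> 2 * B" for i
      using h[of i j0] h[of i0 j0] by (auto simp: abs_le_iff)
    have d2: "\<bar>y$j + x$i0\<bar> \<le> B" for j
      using h[of i0 j] by (simp add: add.commute)
    have eq: "(N1 + N2) * x$i0 = (\<Sum>j\<in>UNIV. y$j + x$i0) - (\<Sum>i\<in>UNIV. x$i - x$i0)"
      by (simp add: sum.distrib sum_subtractf s N1_def N2_def algebra_simps)
    have b1: "\<bar>\<Sum>j\<in>UNIV. y$j + x$i0\<bar> \<le> N2 * B" unfolding N2_def by (rule card_sum_bound) (rule d2)
    have b2: "\<bar>\<Sum>i\<in>UNIV. x$i - x$i0\<bar> \<le> N1 * (2 * B)" unfolding N1_def by (rule card_sum_bound) (rule d1)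
    have "\<bar>(N1 + N2) * x$i0\<bar> \<le> N2 * B + N1 * (2 * B)" unfolding eq using b1 b2 by linarith
    also have "\<dots> \<le> (N1 + N2) * (2 * B)" using B0 N2 by (simp add: algebra_simps)
    finally have "(N1 + N2) * \<bar>x$i0\<bar> \<le> (N1 + N2) * (2 * B)" using N1 N2 by (simp add: abs_mult)
    then have x0: "\<bar>x$i0\<bar> \<le> 2 * B" using N1 N2 by (simp add: mult_le_cancel_left_pos)
    have xi: "\<bar>x$i\<bar> \<le> 4 * B" for i using d1[of i] x0 by linarith
    have yj: "\<bar>y$j\<bar> \<le> 3 * B" for j using d2[of j] x0 by linarith
    have "norm z \<le> norm x + norm y" unfolding z by (rule norm_Pair_le)
    also have "norm x \<le> (\<Sum>i\<in>UNIV. \<bar>x$i\<bar>)" by (rule norm_le_l1_cart)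
    also have "(\<Sum>i\<in>UNIV. \<bar>x$i\<bar>) \<le> N1 * (4 * B)" unfolding N1_def
      using sum_bounded_above[of UNIV "\<lambda>i. \<bar>x$i\<bar>" "4 * B"] xi by simp
    also have "norm y \<le> (\<Sum>j\<in>UNIV. \<bar>y$j\<bar>)" by (rule norm_le_l1_cart)
    also have "(\<Sum>j\<in>UNIV. \<bar>y$j\<bar>) \<le> N2 * (3 * B)" unfolding N2_def
      using sum_bounded_above[of UNIV "\<lambda>j. \<bar>y$j\<bar>" "3 * B"] yj by simp
    finally show ?thesis by simp
  qed
  then show ?thesis unfolding bounded_iff by blast
qed

lemma proj_D:
  fixes C :: "real^'m^'n"
  assumes z: "z \<in> Dhat C" and mass: "(\<Sum>i\<in>UNIV. p1$i) = (\<Sum>j\<in>UNIV. p2$j)"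
  shows "\<exists>z'\<in>D C. phi p1 p2 eps C z' = phi p1 p2 eps C z"
proof -
  obtain x y where zxy: "z = (x, y)" by (cases z)
  define t where "t = ((\<Sum>j\<in>UNIV. y$j) - (\<Sum>i\<in>UNIV. x$i)) / (real CARD('n) + real CARD('m))"
  define z' where "z' = (x + t *\<^sub>R (\<chi> i. 1), y - t *\<^sub>R (\<chi> j. 1))"
  have pos: "0 < real CARD('n) + real CARD('m)" by (simp add: add_pos_pos)
  have "z' \<in> Dhat C" using z unfolding Dhat_iff z'_def zxy shift_aC .
  moreover have "(\<Sum>i\<in>UNIV. fst z'$i) = (\<Sum>j\<in>UNIV. snd z'$j)"
  proof -
    have "t * (real CARD('n) + real CARD('m)) = (\<Sum>j\<in>UNIV. y$j) - (\<Sum>i\<in>UNIV. x$i)"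
      using pos by (simp add: t_def)
    then show ?thesis by (simp add: z'_def sum.distrib sum_subtractf algebra_simps)
  qed
  ultimately have "z' \<in> D C" by (simp add: D_iff)
  moreover have "phi p1 p2 eps C z' = phi p1 p2 eps C z"
    unfolding z'_def zxy by (rule shift_phi[OF mass])
  ultimately show ?thesis by blast
qed


lemma Dhat_nonempty:
  fixes C :: "real^'m^'n"
  shows "\<exists>z. z \<in> Dhat C"
proof -
  define x :: "real^'n" where "x = (\<chi> i. Min (range (\<lambda>j. C$i$j)) - 1)"
  have "(x, 0) \<in> Dhat C"
    unfolding Dhat_iff aC_def
  proof (intro allI)
    fix i j
    have "Min (range (\<lambda>j. C$i$j)) \<le> C$i$j" by (rule Min_le) auto
    moreover have "fst (x, 0::real^'m)$i = Min (range (\<lambda>j. C$i$j)) - 1" by (simp add: x_def)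
    moreover have "snd (x, 0::real^'m)$j = 0" by simp
    ultimately show "0 < C$i$j - fst (x, 0::real^'m)$i - snd (x, 0::real^'m)$j" by linarith
  qed
  then show ?thesis by blast
qed

lemma exists_max:
  fixes C :: "real^'m^'n" and p1 :: "real^'n" and p2 :: "real^'m"
  assumes e: "eps > 0"
    and p1pos: "\<forall>i. p1$i > 0" and p2pos: "\<forall>j. p2$j > 0"
    and mass: "(\<Sum>i\<in>UNIV. p1$i) = (\<Sum>j\<in>UNIV. p2$j)"
  shows "\<exists>u\<in>D C. \<forall>w\<in>Dhat C. phi p1 p2 eps C w \<le> phi p1 p2 eps C u"
proof -
  define s where "s = (\<Sum>i\<in>UNIV. p1$i)"
  have spos: "0 < s" unfolding s_def
    by (rule sum_pos2[of UNIV undefined]) (use p1pos less_imp_le in auto)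
  define V0 :: "real^'m^'n" where "V0 = (\<chi> i j. p1$i * p2$j / s)"
  have V0pos: "\<forall>i j. 0 < V0$i$j" using p1pos p2pos spos by (simp add: V0_def)
  have V0: "V0 \<in> Vo p1 p2"
  proof -
    have r: "(\<Sum>j\<in>UNIV. V0$i$j) = p1$i" for i
    proof -
      have "(\<Sum>j\<in>UNIV. V0$i$j) = p1$i * (\<Sum>j\<in>UNIV. p2$j) / s"
        by (simp add: V0_def sum_distrib_left sum_divide_distrib)
      then show ?thesis using spos mass by (simp add: s_def)
    qed
    have c: "(\<Sum>i\<in>UNIV. V0$i$j) = p2$j" for j
    proof -
      have "(\<Sum>i\<in>UNIV. V0$i$j) = (\<Sum>i\<in>UNIV. p1$i) * p2$j / s"
        by (simp add: V0_def sum_distrib_right sum_divide_distrib)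
      then show ?thesis using spos by (simp add: s_def)
    qed
    show ?thesis using r c V0pos by (auto simp: Vo_def Vset_def less_imp_le)
  qed
  have V0s: "V0 \<in> Vset p1 p2" using V0 by (simp add: Vo_def)
  obtain z1 where "z1 \<in> Dhat C" using Dhat_nonempty by blast
  then obtain z0 where z0: "z0 \<in> D C" using proj_D[OF _ mass] by blast
  define R where "R = tau_obj C eps V0 - phi p1 p2 eps C z0"
  define lo where "lo i j = exp ((- R - eps * ln (V0$i$j) - eps + eps * ln eps) / eps)" for i j
  define hi where "hi i j = 2 * (R + eps) / V0$i$j" for i j
  define h where "h w i j = aC C w i j * V0$i$j - eps * ln (V0$i$j) - eps * ln (aC C w i j) - eps + eps * ln eps" for w i j
  have supb: "lo i j \<le> aC C w i j \<and> aC C w i j \<le> hi i j"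
    if w: "w \<in> Dhat C" and ge: "phi p1 p2 eps C z0 \<le> phi p1 p2 eps C w" for w i j
  proof -
    have aw: "\<forall>i j. 0 < aC C w i j" using w Dhat_iff by blast
    have hnn: "0 \<le> h w i j" for i j unfolding h_def by (rule h_nonneg(1)) (use aw V0pos e in auto)
    have g: "tau_obj C eps V0 - phi p1 p2 eps C w = (\<Sum>i\<in>UNIV. \<Sum>j\<in>UNIV. h w i j)"
      unfolding h_def by (rule gap[OF V0s])
    have "h w i j \<le> (\<Sum>j\<in>UNIV. h w i j)" by (rule member_le_sum) (auto simp: hnn)
    also have "\<dots> \<le> (\<Sum>i\<in>UNIV. \<Sum>j\<in>UNIV. h w i j)" by (rule member_le_sum) (auto simp: hnn sum_nonneg)
    finally have "h w i j \<le> R" using g ge by (simp add: R_def)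
    then show ?thesis unfolding h_def lo_def hi_def
      using h_bounds[of "aC C w i j" "V0$i$j" eps R] aw V0pos e by auto
  qed
  define K where "K = {z \<in> D C. \<forall>i j. lo i j \<le> aC C z i j \<and> aC C z i j \<le> hi i j}"
  have lopos: "0 < lo i j" for i j by (simp add: lo_def)
  have z0K: "z0 \<in> K" unfolding K_def using z0 supb[of z0] by (auto simp: D_iff)
  have Keq: "K = {z. (\<Sum>i\<in>UNIV. fst z$i) = (\<Sum>j\<in>UNIV. snd z$j)} \<inter>
      (\<Inter>i. \<Inter>j. {z. lo i j \<le> aC C z i j} \<inter> {z. aC C z i j \<le> hi i j})"
    unfolding K_def D_iff Dhat_iff using lopos by (auto intro: less_le_trans) (metis less_le_trans lopos)
  have contA: "continuous_on UNIV (\<lambda>z. aC C z i j)" for i j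
    unfolding aC_def by (intro continuous_intros)
  have closedK: "closed K" unfolding Keq
    by (intro closed_Int closed_INT closed_Collect_le closed_Collect_eq continuous_intros contA ballI)
  define B where "B = (\<Sum>i\<in>UNIV. \<Sum>j\<in>UNIV. \<bar>C$i$j\<bar> + \<bar>lo i j\<bar> + \<bar>hi i j\<bar>)"
  have Bge: "\<bar>C$i$j\<bar> + \<bar>lo i j\<bar> + \<bar>hi i j\<bar> \<le> B" for i j
  proof -
    have "\<bar>C$i$j\<bar> + \<bar>lo i j\<bar> + \<bar>hi i j\<bar> \<le> (\<Sum>j\<in>UNIV. \<bar>C$i$j\<bar> + \<bar>lo i j\<bar> + \<bar>hi i j\<bar>)"
      by (rule member_le_sum) auto
    also have "\<dots> \<le> B" unfolding B_def by (rule member_le_sum) (auto intro: sum_nonneg)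
    finally show ?thesis .
  qed
  have boundedK: "bounded K"
  proof (rule bounded_box[where B = B], intro ballI conjI allI)
    fix z assume zK: "z \<in> K"
    then show "(\<Sum>i\<in>UNIV. fst z$i) = (\<Sum>j\<in>UNIV. snd z$j)" by (simp add: K_def D_iff)
    fix i j
    have "lo i j \<le> aC C z i j" "aC C z i j \<le> hi i j" using zK by (auto simp: K_def)
    then show "\<bar>fst z$i + snd z$j\<bar> \<le> B" using Bge[of i j] unfolding aC_def by (auto simp: abs_le_iff)
  qed
  have compactK: "compact K" using closedK boundedK by (simp add: compact_eq_bounded_closed)
  have contphi: "continuous_on K (phi p1 p2 eps C)"
  proof -
    have "continuous_on K (\<lambda>z. p1 \<bullet> fst z + p2 \<bullet> snd z + eps * (\<Sum>i\<in>UNIV. \<Sum>j\<in>UNIV. ln (aC C z i j))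
      + real (CARD('n) * CARD('m)) * eps * (1 - ln eps))"
    proof (intro continuous_intros)
      fix i j
      show "continuous_on K (\<lambda>z. aC C z i j)" using contA continuous_on_subset by blast
      show "\<forall>z\<in>K. aC C z i j \<noteq> 0" using lopos by (auto simp: K_def) (metis less_le_trans less_irrefl)
    qed
    then show ?thesis by (simp add: phi_aC[abs_def])
  qed
  obtain u where uK: "u \<in> K" and umax: "\<forall>w\<in>K. phi p1 p2 eps C w \<le> phi p1 p2 eps C u"
    using continuous_attains_sup[OF compactK _ contphi] z0K by blast
  have uD: "u \<in> D C" using uK by (simp add: K_def)
  have maxD: "phi p1 p2 eps C w \<le> phi p1 p2 eps C u" if w: "w \<in> D C" for w
  proof (cases "phi p1 p2 eps C z0 \<le> phi p1 p2 eps C w")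
    case True
    then have "w \<in> K" unfolding K_def using w supb[of w] by (auto simp: D_iff)
    then show ?thesis using umax by blast
  next
    case False
    then show ?thesis using umax z0K by force
  qed
  have "\<forall>w\<in>Dhat C. phi p1 p2 eps C w \<le> phi p1 p2 eps C u"
  proof
    fix w assume "w \<in> Dhat C"
    then obtain w' where "w' \<in> D C" "phi p1 p2 eps C w' = phi p1 p2 eps C w" using proj_D[OF _ mass] by blast
    then show "phi p1 p2 eps C w \<le> phi p1 p2 eps C u" using maxD by metis
  qed
  then show ?thesis using uD by blast
qed


lemma deriv_row:
  fixes a :: "'n::finite \<Rightarrow> 'm::finite \<Rightarrow> real" and c :: "'n \<Rightarrow> real"
  assumes ap: "\<forall>i j. 0 < a i j"
  shows "((\<lambda>t. A + t * P + eps * (\<Sum>i\<in>UNIV. \<Sum>j\<in>UNIV. ln (a i j - c i * t))) has_real_derivative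
      (P - eps * (\<Sum>i\<in>UNIV. \<Sum>j\<in>UNIV. c i / a i j))) (at 0)"
  using ap by (auto intro!: derivative_eq_intros simp: divide_inverse sum_negf mult.commute)


lemma deriv_col:
  fixes a :: "'n::finite \<Rightarrow> 'm::finite \<Rightarrow> real" and c :: "'m \<Rightarrow> real"
  assumes ap: "\<forall>i j. 0 < a i j"
  shows "((\<lambda>t. A + t * P + eps * (\<Sum>i\<in>UNIV. \<Sum>j\<in>UNIV. ln (a i j - c j * t))) has_real_derivative
      (P - eps * (\<Sum>i\<in>UNIV. \<Sum>j\<in>UNIV. c j / a i j))) (at 0)"
  using ap by (auto intro!: derivative_eq_intros simp: divide_inverse sum_negf mult.commute)

lemma stationary:
  fixes C :: "real^'m^'n" and p1 :: "real^'n" and p2 :: "real^'m"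
  assumes e: "0 < eps" and u: "u \<in> Dhat C"
    and umax: "\<forall>w\<in>Dhat C. phi p1 p2 eps C w \<le> phi p1 p2 eps C u"
  shows "Umat eps C (fst u) (snd u) \<in> Vo p1 p2"
proof -
  obtain x y where uxy: "u = (x, y)" by (cases u)
  have ap: "\<forall>i j. 0 < aC C u i j" using u Dhat_iff by blast
  define d where "d = Min ((\<lambda>p. aC C u (fst p) (snd p)) ` UNIV)"
  have dpos: "0 < d" unfolding d_def using ap by (subst Min_gr_iff) auto
  have dle: "d \<le> aC C u i j" for i j
  proof -
    have "aC C u i j \<in> (\<lambda>p. aC C u (fst p) (snd p)) ` UNIV" by (rule image_eqI[where x="(i, j)"]) auto
    then show ?thesis unfolding d_def by (rule Min_le[rotated]) simp
  qed
  define K where "K = real (CARD('n) * CARD('m)) * eps * (1 - ln eps)"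
  have Ue: "Umat eps C (fst u) (snd u) $i$j = eps / aC C u i j" for i j by (simp add: Umat_def aC_def uxy)
  have gu: "phi p1 p2 eps C (x, y) = phi p1 p2 eps C u" by (simp add: uxy)
  have row: "(\<Sum>j\<in>UNIV. eps / aC C u i j) = p1$i" for i
  proof -
    define c :: "'n \<Rightarrow> real" where "c i' = (if i' = i then 1 else 0)" for i'
    define g where "g t = phi p1 p2 eps C (x + t *\<^sub>R axis i 1, y)" for t
    have ga: "aC C (x + t *\<^sub>R axis i 1, y) i' j = aC C u i' j - c i' * t" for t i' j
      by (simp add: aC_def axis_def c_def uxy)
    have gi: "p1 \<bullet> (x + t *\<^sub>R axis i 1) = p1 \<bullet> x + t * p1$i" for t
      by (simp add: inner_add_right inner_axis)
    have geq: "g = (\<lambda>t. (p1 \<bullet> x + p2 \<bullet> y + K) + t * p1$i + eps * (\<Sum>i'\<in>UNIV. \<Sum>j\<in>UNIV. ln (aC C u i' j - c i' * t)))"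
    proof
      fix t
      have "g t = p1 \<bullet> x + t * p1$i + p2 \<bullet> y + eps * (\<Sum>i'\<in>UNIV. \<Sum>j\<in>UNIV. ln (aC C u i' j - c i' * t)) + K"
        unfolding g_def phi_aC fst_conv snd_conv ga gi K_def by simp
      then show "g t = (p1 \<bullet> x + p2 \<bullet> y + K) + t * p1$i + eps * (\<Sum>i'\<in>UNIV. \<Sum>j\<in>UNIV. ln (aC C u i' j - c i' * t))"
        by linarith
    qed
    have Dg: "(g has_real_derivative (p1$i - eps * (\<Sum>i'\<in>UNIV. \<Sum>j\<in>UNIV. c i' / aC C u i' j))) (at 0)"
      unfolding geq by (rule deriv_row[OF ap])
    have lm: "\<forall>t. \<bar>0 - t\<bar> < d \<longrightarrow> g t \<le> g 0"
    proof (intro allI impI)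
      fix t :: real assume t: "\<bar>0 - t\<bar> < d"
      have "(x + t *\<^sub>R axis i 1, y) \<in> Dhat C"
        unfolding Dhat_iff ga
      proof (intro allI)
        fix i' j
        have "c i' * t \<le> \<bar>t\<bar>" by (simp add: c_def abs_ge_self)
        then show "0 < aC C u i' j - c i' * t" using t dle[of i' j] by linarith
      qed
      then show "g t \<le> g 0" using umax unfolding g_def by (simp add: gu)
    qed
    have "p1$i - eps * (\<Sum>i'\<in>UNIV. \<Sum>j\<in>UNIV. c i' / aC C u i' j) = 0"
      by (rule DERIV_local_max[OF Dg dpos lm])
    moreover have "(\<Sum>i'\<in>UNIV. \<Sum>j\<in>UNIV. c i' / aC C u i' j) = (\<Sum>j\<in>UNIV. 1 / aC C u i j)"
    proof -
      have "(\<Sum>i'\<in>UNIV. \<Sum>j\<in>UNIV. c i' / aC C u i' j) = (\<Sum>i'\<in>UNIV. if i' = i then (\<Sum>j\<in>UNIV. 1 / aC C u i' j) else 0)"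
        by (rule sum.cong) (auto simp: c_def)
      also have "\<dots> = (\<Sum>j\<in>UNIV. 1 / aC C u i j)" by simp
      finally show ?thesis .
    qed
    moreover have "eps * (\<Sum>j\<in>UNIV. 1 / aC C u i j) = (\<Sum>j\<in>UNIV. eps / aC C u i j)"
      by (simp add: sum_distrib_left)
    ultimately show ?thesis by simp
  qed
  have col: "(\<Sum>i\<in>UNIV. eps / aC C u i j) = p2$j" for j
  proof -
    define c :: "'m \<Rightarrow> real" where "c j' = (if j' = j then 1 else 0)" for j'
    define g where "g t = phi p1 p2 eps C (x, y + t *\<^sub>R axis j 1)" for t
    have ga: "aC C (x, y + t *\<^sub>R axis j 1) i j' = aC C u i j' - c j' * t" for t i j'
      by (simp add: aC_def axis_def c_def uxy)
    have gi: "p2 \<bullet> (y + t *\<^sub>R axis j 1) = p2 \<bullet> y + t * p2$j" for t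
      by (simp add: inner_add_right inner_axis)
    have geq: "g = (\<lambda>t. (p1 \<bullet> x + p2 \<bullet> y + K) + t * p2$j + eps * (\<Sum>i\<in>UNIV. \<Sum>j'\<in>UNIV. ln (aC C u i j' - c j' * t)))"
    proof
      fix t
      have "g t = p1 \<bullet> x + (p2 \<bullet> y + t * p2$j) + eps * (\<Sum>i\<in>UNIV. \<Sum>j'\<in>UNIV. ln (aC C u i j' - c j' * t)) + K"
        unfolding g_def phi_aC fst_conv snd_conv ga gi K_def by simp
      then show "g t = (p1 \<bullet> x + p2 \<bullet> y + K) + t * p2$j + eps * (\<Sum>i\<in>UNIV. \<Sum>j'\<in>UNIV. ln (aC C u i j' - c j' * t))"
        by linarith
    qed
    have Dg: "(g has_real_derivative (p2$j - eps * (\<Sum>i\<in>UNIV. \<Sum>j'\<in>UNIV. c j' / aC C u i j'))) (at 0)"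
      unfolding geq by (rule deriv_col[OF ap])
    have lm: "\<forall>t. \<bar>0 - t\<bar> < d \<longrightarrow> g t \<le> g 0"
    proof (intro allI impI)
      fix t :: real assume t: "\<bar>0 - t\<bar> < d"
      have "(x, y + t *\<^sub>R axis j 1) \<in> Dhat C"
        unfolding Dhat_iff ga
      proof (intro allI)
        fix i j'
        have "c j' * t \<le> \<bar>t\<bar>" by (simp add: c_def abs_ge_self)
        then show "0 < aC C u i j' - c j' * t" using t dle[of i j'] by linarith
      qed
      then show "g t \<le> g 0" using umax unfolding g_def by (simp add: gu)
    qed
    have "p2$j - eps * (\<Sum>i\<in>UNIV. \<Sum>j'\<in>UNIV. c j' / aC C u i j') = 0"
      by (rule DERIV_local_max[OF Dg dpos lm])
    moreover have "(\<Sum>i\<in>UNIV. \<Sum>j'\<in>UNIV. c j' / aC C u i j') = (\<Sum>i\<in>UNIV. 1 / aC C u i j)"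
    proof (rule sum.cong[OF refl])
      fix i
      have "(\<Sum>j'\<in>UNIV. c j' / aC C u i j') = (\<Sum>j'\<in>UNIV. if j' = j then 1 / aC C u i j' else 0)"
        by (rule sum.cong) (auto simp: c_def)
      also have "\<dots> = 1 / aC C u i j" by simp
      finally show "(\<Sum>j'\<in>UNIV. c j' / aC C u i j') = 1 / aC C u i j" .
    qed
    moreover have "eps * (\<Sum>i\<in>UNIV. 1 / aC C u i j) = (\<Sum>i\<in>UNIV. eps / aC C u i j)"
      by (simp add: sum_distrib_left)
    ultimately show ?thesis by simp
  qed
  show ?thesis
    unfolding Vo_def Vset_def using row col ap e by (auto simp: Ue less_imp_le)
qed


theorem theorem1p1:
  fixes C :: "real^'m^'n" and p1 :: "real^'n" and p2 :: "real^'m" and eps :: real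
  assumes eps: "eps > 0"
    and p1pos: "\<forall>i. p1$i > 0" and p2pos: "\<forall>j. p2$j > 0"
    and mass: "(\<Sum>i\<in>UNIV. p1$i) = (\<Sum>j\<in>UNIV. p2$j)"
  shows "concave_on (Dhat C) (phi p1 p2 eps C)
    \<and> strict_concave_on (D C) (phi p1 p2 eps C)
    \<and> (\<exists>z\<in>Dhat C. \<forall>w\<in>Dhat C. phi p1 p2 eps C w \<le> phi p1 p2 eps C z)
    \<and> (\<exists>z\<in>D C. \<forall>w\<in>D C. phi p1 p2 eps C w \<le> phi p1 p2 eps C z)
    \<and> (SUP z\<in>Dhat C. phi p1 p2 eps C z) = tau_beta C p1 p2 eps
    \<and> (SUP z\<in>D C. phi p1 p2 eps C z) = tau_beta C p1 p2 eps
    \<and> (\<exists>u1 u2.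
          {z \<in> Dhat C. \<forall>w\<in>Dhat C. phi p1 p2 eps C w \<le> phi p1 p2 eps C z} = Lline u1 u2
        \<and> Lline u1 u2 \<inter> D C = {(u1, u2)}
        \<and> Umat eps C u1 u2 \<in> Vo p1 p2
        \<and> tau_obj C eps (Umat eps C u1 u2) = tau_beta C p1 p2 eps
        \<and> (\<forall>V\<in>Vo p1 p2. tau_obj C eps (Umat eps C u1 u2) \<le> tau_obj C eps V)
        \<and> (\<forall>V\<in>Vo p1 p2. tau_obj C eps V = tau_beta C p1 p2 eps \<longrightarrow> V = Umat eps C u1 u2)
        \<and> (\<forall>x y. (x, y) \<in> D C \<and> Umat eps C x y \<in> Vo p1 p2 \<longrightarrow> (x, y) = (u1, u2)))"
proof -
  let ?P = "phi p1 p2 eps C"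
  obtain u where uD: "u \<in> D C" and umax: "\<forall>w\<in>Dhat C. ?P w \<le> ?P u"
    using exists_max[OF eps p1pos p2pos mass] by blast
  obtain u1 u2 where uu: "u = (u1, u2)" by (cases u)
  have uDh: "u \<in> Dhat C" using uD D_iff by blast
  define U where "U = Umat eps C u1 u2"
  have UVo: "U \<in> Vo p1 p2" using stationary[OF eps uDh umax] by (simp add: U_def uu)
  have phiU: "?P u = tau_obj C eps U" using eqU[OF uDh _ eps] UVo by (simp add: U_def uu)
  have Umin: "\<forall>V\<in>Vo p1 p2. tau_obj C eps U \<le> tau_obj C eps V"
  proof
    fix V assume "V \<in> Vo p1 p2"
    then show "tau_obj C eps U \<le> tau_obj C eps V" using WD(1)[OF uDh _ eps, of V p1 p2] phiU by simp
  qed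
  have tauB: "tau_beta C p1 p2 eps = tau_obj C eps U"
    unfolding tau_beta_def by (rule cInf_eq_minimum) (use UVo Umin in auto)
  have maxD: "\<forall>w\<in>D C. ?P w \<le> ?P u" using umax D_iff by blast
  have supDh: "(SUP z\<in>Dhat C. ?P z) = ?P u"
    by (rule cSup_eq_maximum) (use uDh umax in auto)
  have supD: "(SUP z\<in>D C. ?P z) = ?P u"
    by (rule cSup_eq_maximum) (use uD maxD in auto)
  have inline: "z \<in> Lline u1 u2" if z: "z \<in> Dhat C" and pz: "?P z = ?P u" for z
  proof -
    have "?P z = tau_obj C eps U" using pz phiU by simp
    then have "U = Umat eps C (fst z) (snd z)" using WD(2)[OF z UVo eps] by simp
    then have h: "\<forall>i j. - u1$i - u2$j = - fst z$i - snd z$j"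
      using eps by (simp add: U_def Umat_def uu vec_eq_iff)
    have "\<forall>i j. fst z$i + snd z$j = u1$i + u2$j"
    proof (intro allI)
      fix i j show "fst z$i + snd z$j = u1$i + u2$j" using h[rule_format, of i j] by linarith
    qed
    then obtain t where "fst z = u1 + t *\<^sub>R (\<chi> i. 1)" "snd z = u2 - t *\<^sub>R (\<chi> j. 1)"
      using line_char by blast
    then show ?thesis unfolding Lline_def by (metis (mono_tags, lifting) mem_Collect_eq prod.collapse)
  qed
  have lineprops: "z \<in> Dhat C \<and> ?P z = ?P u" if z: "z \<in> Lline u1 u2" for z
  proof -
    obtain t where zt: "z = (u1 + t *\<^sub>R (\<chi> i. 1), u2 - t *\<^sub>R (\<chi> j. 1))" using z unfolding Lline_def by blast
    have "z \<in> Dhat C" using uDh unfolding zt uu Dhat_iff shift_aC .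
    moreover have "?P z = ?P u" unfolding zt uu by (rule shift_phi[OF mass])
    ultimately show ?thesis by blast
  qed
  have lineD: "z = (u1, u2)" if z: "z \<in> Lline u1 u2" and zD: "z \<in> D C" for z
  proof -
    obtain t where zt: "z = (u1 + t *\<^sub>R (\<chi> i. 1), u2 - t *\<^sub>R (\<chi> j. 1))" using z unfolding Lline_def by blast
    have "\<forall>i j. fst z$i + snd z$j = u1$i + u2$j" by (simp add: zt)
    moreover have "(\<Sum>i\<in>UNIV. fst z$i) = (\<Sum>j\<in>UNIV. snd z$j)" using zD D_iff by blast
    moreover have "(\<Sum>i\<in>UNIV. u1$i) = (\<Sum>j\<in>UNIV. u2$j)" using uD uu by (simp add: D_iff)
    ultimately have "fst z = u1 \<and> snd z = u2" by (intro line_D) auto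
    then show ?thesis by (simp add: prod_eq_iff)
  qed
  have uL: "(u1, u2) \<in> Lline u1 u2" unfolding Lline_def by (auto intro!: exI[of _ 0])
  have maxset: "{z \<in> Dhat C. \<forall>w\<in>Dhat C. ?P w \<le> ?P z} = Lline u1 u2"
  proof (intro set_eqI iffI)
    fix z assume "z \<in> {z \<in> Dhat C. \<forall>w\<in>Dhat C. ?P w \<le> ?P z}"
    then have z: "z \<in> Dhat C" and zm: "\<forall>w\<in>Dhat C. ?P w \<le> ?P z" by auto
    have "?P z = ?P u" using zm uDh umax z by (meson order_antisym)
    then show "z \<in> Lline u1 u2" using inline z by blast
  next
    fix z assume "z \<in> Lline u1 u2"
    then have "z \<in> Dhat C" "?P z = ?P u" using lineprops by blast+
    then show "z \<in> {z \<in> Dhat C. \<forall>w\<in>Dhat C. ?P w \<le> ?P z}" using umax by auto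
  qed
  have inter: "Lline u1 u2 \<inter> D C = {(u1, u2)}"
    using lineD uL uD uu by blast
  have uniq: "\<forall>V\<in>Vo p1 p2. tau_obj C eps V = tau_beta C p1 p2 eps \<longrightarrow> V = Umat eps C u1 u2"
  proof (intro ballI impI)
    fix V assume V: "V \<in> Vo p1 p2" and "tau_obj C eps V = tau_beta C p1 p2 eps"
    then have "?P u = tau_obj C eps V" using tauB phiU by simp
    then show "V = Umat eps C u1 u2" using WD(2)[OF uDh V eps] by (simp add: uu)
  qed
  have last: "\<forall>x y. (x, y) \<in> D C \<and> Umat eps C x y \<in> Vo p1 p2 \<longrightarrow> (x, y) = (u1, u2)"
  proof (intro allI impI)
    fix x y assume h: "(x, y) \<in> D C \<and> Umat eps C x y \<in> Vo p1 p2"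
    then have xyDh: "(x, y) \<in> Dhat C" using D_iff by blast
    have "?P (x, y) = tau_obj C eps (Umat eps C x y)" using eqU[OF xyDh _ eps] h by simp
    also have "\<dots> \<ge> tau_obj C eps U" using Umin h by blast
    finally have "?P (x, y) \<ge> ?P u" using phiU by simp
    then have "?P (x, y) = ?P u" using umax xyDh by (meson order_antisym)
    then have "(x, y) \<in> Lline u1 u2" using inline xyDh by blast
    then show "(x, y) = (u1, u2)" using lineD h by blast
  qed
  show ?thesis
  proof (intro conjI)
    show "concave_on (Dhat C) ?P" by (rule concave_phi[OF eps])
    show "strict_concave_on (D C) ?P" by (rule strict_concave_phi[OF eps])
    show "\<exists>z\<in>Dhat C. \<forall>w\<in>Dhat C. ?P w \<le> ?P z" using uDh umax by blast
    show "\<exists>z\<in>D C. \<forall>w\<in>D C. ?P w \<le> ?P z" using uD maxD by blast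
    show "(SUP z\<in>Dhat C. ?P z) = tau_beta C p1 p2 eps" using supDh tauB phiU by simp
    show "(SUP z\<in>D C. ?P z) = tau_beta C p1 p2 eps" using supD tauB phiU by simp
    show "\<exists>u1 u2.
          {z \<in> Dhat C. \<forall>w\<in>Dhat C. ?P w \<le> ?P z} = Lline u1 u2
        \<and> Lline u1 u2 \<inter> D C = {(u1, u2)}
        \<and> Umat eps C u1 u2 \<in> Vo p1 p2
        \<and> tau_obj C eps (Umat eps C u1 u2) = tau_beta C p1 p2 eps
        \<and> (\<forall>V\<in>Vo p1 p2. tau_obj C eps (Umat eps C u1 u2) \<le> tau_obj C eps V)
        \<and> (\<forall>V\<in>Vo p1 p2. tau_obj C eps V = tau_beta C p1 p2 eps \<longrightarrow> V = Umat eps C u1 u2)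
        \<and> (\<forall>x y. (x, y) \<in> D C \<and> Umat eps C x y \<in> Vo p1 p2 \<longrightarrow> (x, y) = (u1, u2))"
    proof (intro exI[of _ u1] exI[of _ u2] conjI)
      show "{z \<in> Dhat C. \<forall>w\<in>Dhat C. ?P w \<le> ?P z} = Lline u1 u2" by (rule maxset)
      show "Lline u1 u2 \<inter> D C = {(u1, u2)}" by (rule inter)
      show "Umat eps C u1 u2 \<in> Vo p1 p2" using UVo by (simp add: U_def)
      show "tau_obj C eps (Umat eps C u1 u2) = tau_beta C p1 p2 eps" using tauB by (simp add: U_def)
      show "\<forall>V\<in>Vo p1 p2. tau_obj C eps (Umat eps C u1 u2) \<le> tau_obj C eps V" using Umin by (simp add: U_def)
      show "\<forall>V\<in>Vo p1 p2. tau_obj C eps V = tau_beta C p1 p2 eps \<longrightarrow> V = Umat eps C u1 u2" by (rule uniq)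
      show "\<forall>x y. (x, y) \<in> D C \<and> Umat eps C x y \<in> Vo p1 p2 \<longrightarrow> (x, y) = (u1, u2)" by (rule last)
    qed
  qed
qed

thm_deps ln_strict ln_conc h_nonneg h_bounds Dhat_iff D_iff phi_aC gap WD eqU shift_aC shift_phi line_char line_D comb_aC comb_phi comb_aC2 pos_comb convex_Dhat convex_D concave_phi strict_concave_phi card_sum_bound bounded_box proj_D Dhat_nonempty exists_max deriv_row deriv_col stationary theorem1p1 

end
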